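(* Let $F$ be a field, $n\ge1$, and $g\in\mathrm{GL}_n(F)$. Suppose that $\lambda\in F$, $\lambda\neq0$, and that $g-\lambda 1$ has rank $r$. Let $\varphi_1,\varphi_2$ be non-negative real numbers with $\varphi_1+\varphi_2=r$. Then: (a) there exist $h,k\in\mathrm{GL}_n(F)$ with $g=hk$ such that $|\mathrm{rk}(h-\lambda1)-\varphi_1|\le2$ and $|\mathrm{rk}(k-1)-\varphi_2|\le2$; (b) if moreover $g\in\mathrm{SL}_n(F)$, then there exist $h,k\in\mathrm{SL}_n(F)$ with $g=hk$ such that $|\mathrm{rk}(h-\lambda1)-\varphi_1|\le3$ and $|\mathrm{rk}(k-1)-\varphi_2|\le3$.
   Context: $1$ denotes the $n\times n$ identity matrix. *)

theory Defs
  imports "Jordan_Normal_Form.DL_Rank"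
begin

definition GL :: "nat \<Rightarrow> 'a::field mat set" where
  "GL n = {A \<in> carrier_mat n n. invertible_mat A}"

definition SL :: "nat \<Rightarrow> 'a::field mat set" where
  "SL n = {A \<in> carrier_mat n n. det A = 1}"

end

theory Submission imports Defs begin

context vec_space begin

lemma span_cols_eq:
  assumes A: "A \<in> carrier_mat n nc"
  shows "span (set (cols A)) = {A *\<^sub>v y | y. y \<in> carrier_vec nc}"
proof -
  have cs: "set (cols A) \<subseteq> carrier_vec n" using A cols_dim by blast
  have mA: "mat_of_cols n (cols A) = A" using A mat_of_cols_cols[of A] by auto
  have len: "length (cols A) = nc" using A by auto
  have "span (set (cols A)) = span_list (cols A)" using span_list_as_span[OF cs] by simp
  also have "\<dots> = {A *\<^sub>v y | y. y \<in> carrier_vec nc}"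
  proof safe
    fix x assume "x \<in> span_list (cols A)"
    then obtain c where "x = lincomb_list c (cols A)" unfolding span_list_def by auto
    moreover have "\<forall>w\<in>set (cols A). dim_vec w = n" using cs by auto
    ultimately have "x = A *\<^sub>v vec nc c"
      using lincomb_list_as_mat_mult[of "cols A" c] mA len by auto
    then show "\<exists>y. x = A *\<^sub>v y \<and> y \<in> carrier_vec nc" by auto
  next
    fix y :: "'a vec" assume y: "y \<in> carrier_vec nc"
    have "\<forall>w\<in>set (cols A). dim_vec w = n" using cs by auto
    then have "lincomb_list (\<lambda>i. y $ i) (cols A) = A *\<^sub>v vec nc (\<lambda>i. y $ i)"
      using lincomb_list_as_mat_mult[of "cols A" "\<lambda>i. y $ i"] mA len by auto
    also have "vec nc (\<lambda>i. y $ i) = y" using y by auto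
    finally show "A *\<^sub>v y \<in> span_list (cols A)" unfolding span_list_def
      by (metis (mono_tags, lifting) Pi_I UNIV_I mem_Collect_eq)
  qed
  finally show ?thesis .
qed

lemma rank_less_of_span:
  assumes A: "A \<in> carrier_mat n na" and B: "B \<in> carrier_mat n nb"
    and sub: "set (cols B) \<subseteq> span (set (cols A))"
    and v: "v \<in> span (set (cols A))" and nv: "v \<notin> span (set (cols B))"
  shows "rank B < rank A"
proof -
  have csA: "set (cols A) \<subseteq> carrier_vec n" using A cols_dim by blast
  have csB: "set (cols B) \<subseteq> carrier_vec n" using B cols_dim by blast
  have vc: "v \<in> carrier_vec n" using v span_is_subset2[OF csA] by auto
  obtain T where T: "maximal T (\<lambda>T. T \<subseteq> set (cols B) \<and> lin_indpt T)"
    using maximal_exists[of "(\<lambda>T. T \<subseteq> set (cols B) \<and> lin_indpt T)" "card (set (cols B))" "{}"]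
    by (meson List.finite_set card_mono empty_iff empty_subsetI finite_lin_indpt2 rev_finite_subset)
  have TB: "T \<subseteq> set (cols B)" "lin_indpt T" using T(1) unfolding maximal_def by auto
  have Tf: "finite T" using TB(1) finite_subset by blast
  have rB: "rank B = card T" using rank_card_indpt[OF B T(1)] .
  have "span T \<subseteq> span (set (cols B))" using span_is_monotone[OF TB(1)] .
  then have vT: "v \<notin> span T" using nv by auto
  have vnT: "v \<notin> T" using vT in_own_span TB csB by blast
  have Tc: "T \<subseteq> carrier_vec n" using TB csB by auto
  have li: "lin_indpt (T \<union> {v})"
    using lin_dep_iff_in_span[OF Tc TB(2) vc vnT] vT by auto
  define M where "M = mat_of_cols n (v # cols A @ cols B)"
  have sc: "set (v # cols A @ cols B) \<subseteq> carrier_vec n" using vc csA csB by auto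
  have M: "M \<in> carrier_mat n (Suc (na + nb))" unfolding M_def using A B by auto
  have cM: "set (cols M) = insert v (set (cols A) \<union> set (cols B))"
    unfolding M_def using cols_mat_of_cols[OF sc] by auto
  have "span (set (cols M)) = span (set (cols A))"
  proof
    show "span (set (cols M)) \<subseteq> span (set (cols A))"
      using span_subsetI[OF csA] cM v sub in_own_span[OF csA] by auto
    show "span (set (cols A)) \<subseteq> span (set (cols M))"
      using span_is_monotone[of "set (cols A)" "set (cols M)"] cM by auto
  qed
  then have rM: "rank M = rank A" unfolding rank_def by simp
  have "card (T \<union> {v}) \<le> rank M"
    using rank_ge_card_indpt[OF M _ li] cM TB by auto
  moreover have "card (T \<union> {v}) = card T + 1" using Tf vnT by auto
  ultimately show ?thesis using rB rM by auto
qed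


lemma rank_le_of_span:
  assumes A: "A \<in> carrier_mat n na" and B: "B \<in> carrier_mat n nb"
    and sub: "set (cols B) \<subseteq> span (set (cols A))"
  shows "rank B \<le> rank A"
proof -
  have csA: "set (cols A) \<subseteq> carrier_vec n" using A cols_dim by blast
  have csB: "set (cols B) \<subseteq> carrier_vec n" using B cols_dim by blast
  obtain T where T: "maximal T (\<lambda>T. T \<subseteq> set (cols B) \<and> lin_indpt T)"
    using maximal_exists[of "(\<lambda>T. T \<subseteq> set (cols B) \<and> lin_indpt T)" "card (set (cols B))" "{}"]
    by (meson List.finite_set card_mono empty_iff empty_subsetI finite_lin_indpt2 rev_finite_subset)
  have TB: "T \<subseteq> set (cols B)" "lin_indpt T" using T(1) unfolding maximal_def by auto
  have rB: "rank B = card T" using rank_card_indpt[OF B T(1)] .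
  define M where "M = mat_of_cols n (cols A @ cols B)"
  have sc: "set (cols A @ cols B) \<subseteq> carrier_vec n" using csA csB by auto
  have M: "M \<in> carrier_mat n (na + nb)" unfolding M_def using A B by auto
  have cM: "set (cols M) = set (cols A) \<union> set (cols B)"
    unfolding M_def using cols_mat_of_cols[OF sc] by auto
  have "span (set (cols M)) = span (set (cols A))"
  proof
    show "span (set (cols M)) \<subseteq> span (set (cols A))"
      using span_subsetI[OF csA] cM sub in_own_span[OF csA] by auto
    show "span (set (cols A)) \<subseteq> span (set (cols M))"
      using span_is_monotone[of "set (cols A)" "set (cols M)"] cM by auto
  qed
  then have rM: "rank M = rank A" unfolding rank_def by simp
  have "card T \<le> rank M"
    using rank_ge_card_indpt[OF M _ TB(2)] cM TB by auto
  then show ?thesis using rB rM by auto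
qed

lemma rank_mult_le:
  assumes A: "A \<in> carrier_mat n na" and B: "B \<in> carrier_mat na nb"
  shows "rank (A * B) \<le> rank A"
proof (rule rank_le_of_span[OF A])
  show "A * B \<in> carrier_mat n nb" using A B by auto
  show "set (cols (A * B)) \<subseteq> span (set (cols A))"
  proof
    fix x assume "x \<in> set (cols (A * B))"
    then obtain j where j: "j < dim_col (A * B)" "x = col (A * B) j"
      by (metis cols_length cols_nth in_set_conv_nth)
    then have "x = A *\<^sub>v col B j" using col_mult2[OF A B] B by auto
    moreover have "col B j \<in> carrier_vec na" using B by auto
    ultimately show "x \<in> span (set (cols A))" using span_cols_eq[OF A] by auto
  qed
qed

lemma rank_less_functional:
  assumes A: "A \<in> carrier_mat n na" and B: "B \<in> carrier_mat n nb"
    and cB: "\<And>j. j < nb \<Longrightarrow> \<exists>y \<in> carrier_vec na. col B j = A *\<^sub>v y"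
    and x: "x \<in> carrier_vec na" and z: "z \<in> carrier_vec n" and zv: "z \<bullet> (A *\<^sub>v x) \<noteq> 0"
    and zB: "\<And>y. y \<in> carrier_vec nb \<Longrightarrow> z \<bullet> (B *\<^sub>v y) = 0"
  shows "rank B < rank A"
proof (rule rank_less_of_span[OF A B])
  show "set (cols B) \<subseteq> span (set (cols A))"
  proof
    fix u assume "u \<in> set (cols B)"
    then obtain j where j: "j < dim_col B" "u = col B j"
      by (metis cols_length cols_nth in_set_conv_nth)
    then show "u \<in> span (set (cols A))" using cB[of j] B span_cols_eq[OF A] by auto
  qed
  show "A *\<^sub>v x \<in> span (set (cols A))" using span_cols_eq[OF A] x by auto
  show "A *\<^sub>v x \<notin> span (set (cols B))"
  proof
    assume "A *\<^sub>v x \<in> span (set (cols B))"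
    then obtain y where "y \<in> carrier_vec nb" "A *\<^sub>v x = B *\<^sub>v y" using span_cols_eq[OF B] by auto
    then show False using zB zv by auto
  qed
qed

end

lemma rank_mult_inv:
  fixes A :: "'a::field mat"
  assumes A: "A \<in> carrier_mat n m" and B: "B \<in> carrier_mat m m" and C: "C \<in> carrier_mat m m"
    and BC: "B * C = 1\<^sub>m m"
  shows "vec_space.rank n (A * B) = vec_space.rank n A"
proof -
  have "A * B * C = A" using assoc_mult_mat[OF A B C] BC A by auto
  then have "vec_space.rank n A \<le> vec_space.rank n (A * B)"
    using vec_space.rank_mult_le[of "A * B" n m C m] A B C by (metis mult_carrier_mat)
  moreover have "vec_space.rank n (A * B) \<le> vec_space.rank n A"
    using vec_space.rank_mult_le[OF A B] .
  ultimately show ?thesis by auto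
qed

lemma rank_smult_le:
  fixes A :: "'a::field mat"
  assumes A: "A \<in> carrier_mat n m"
  shows "vec_space.rank n (k \<cdot>\<^sub>m A) \<le> vec_space.rank n A"
proof -
  have "k \<cdot>\<^sub>m A = A * (k \<cdot>\<^sub>m 1\<^sub>m m)"
    using mult_smult_distrib[OF A one_carrier_mat, where k=k] A by auto
  then show ?thesis using vec_space.rank_mult_le[OF A, of "k \<cdot>\<^sub>m 1\<^sub>m m" m] by auto
qed

lemma rank_add_le:
  fixes A :: "'a::field mat"
  assumes "A \<in> carrier_mat n m" "B \<in> carrier_mat n m"
  shows "vec_space.rank n (A + B) \<le> vec_space.rank n A + vec_space.rank n B"
  using vec_space.rank_subadditive[OF assms] .

lemma rank_diff_le:
  fixes A :: "'a::field mat"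
  assumes A: "A \<in> carrier_mat n m" and B: "B \<in> carrier_mat n m"
  shows "vec_space.rank n (A - B) \<le> vec_space.rank n A + vec_space.rank n B"
proof -
  have "A - B = A + (-1) \<cdot>\<^sub>m B" using A B by (intro eq_matI) auto
  then have "vec_space.rank n (A - B) \<le> vec_space.rank n A + vec_space.rank n ((-1) \<cdot>\<^sub>m B)"
    using rank_add_le[OF A, of "(-1) \<cdot>\<^sub>m B"] B by auto
  then show ?thesis using rank_smult_le[OF B, of "-1"] by auto
qed


lemma smult_one_mult_vec:
  fixes v :: "'a::field vec"
  assumes v: "v \<in> carrier_vec n"
  shows "(lam \<cdot>\<^sub>m 1\<^sub>m n) *\<^sub>v v = lam \<cdot>\<^sub>v v"
proof -
  have "(lam \<cdot>\<^sub>m 1\<^sub>m n) *\<^sub>v v = (lam \<cdot>\<^sub>m 1\<^sub>m n) * 1\<^sub>m n *\<^sub>v v" using v by simp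
  also have "\<dots> = lam \<cdot>\<^sub>v v"
  proof (rule eq_vecI)
    fix i assume "i < dim_vec (lam \<cdot>\<^sub>v v)"
    then have i: "i < n" using v by auto
    have "((lam \<cdot>\<^sub>m 1\<^sub>m n) *\<^sub>v v) $ i = row (lam \<cdot>\<^sub>m 1\<^sub>m n) i \<bullet> v" using i by auto
    also have "row (lam \<cdot>\<^sub>m 1\<^sub>m n) i = lam \<cdot>\<^sub>v unit_vec n i"
      using i by (intro eq_vecI) (auto simp: unit_vec_def)
    also have "(lam \<cdot>\<^sub>v unit_vec n i) \<bullet> v = lam * v $ i"
      using i v by (simp add: scalar_prod_left_unit)
    finally show "((lam \<cdot>\<^sub>m 1\<^sub>m n) * 1\<^sub>m n *\<^sub>v v) $ i = (lam \<cdot>\<^sub>v v) $ i" using i v by simp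
  qed (use v in auto)
  finally show ?thesis .
qed

lemma step:
  fixes h :: "'a::field mat"
  assumes h: "h \<in> carrier_mat n n" and hi: "hi \<in> carrier_mat n n" and hhi: "hi * h = 1\<^sub>m n"
    and lam: "lam \<noteq> 0" and pos: "vec_space.rank n (h - lam \<cdot>\<^sub>m 1\<^sub>m n) > 0"
  shows "\<exists>t ti. t \<in> carrier_mat n n \<and> ti \<in> carrier_mat n n \<and> t * ti = 1\<^sub>m n \<and> ti * t = 1\<^sub>m n
     \<and> vec_space.rank n (t - 1\<^sub>m n) \<le> 1
     \<and> vec_space.rank n (h - lam \<cdot>\<^sub>m t) < vec_space.rank n (h - lam \<cdot>\<^sub>m 1\<^sub>m n)"
proof -
  define A where "A = h - lam \<cdot>\<^sub>m 1\<^sub>m n"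
  have A: "A \<in> carrier_mat n n" unfolding A_def by (rule minus_carrier_mat) simp
  have r0: "vec_space.rank n (0\<^sub>m n n :: 'a mat) = 0" by (rule vec_space.rank_0I)
  have "A \<noteq> 0\<^sub>m n n" using pos r0 A_def by auto
  then obtain i0 j0 where ij: "i0 < n" "j0 < n" "A $$ (i0,j0) \<noteq> 0"
    using A by (metis carrier_matD(1) carrier_matD(2) eq_matI index_zero_mat(1,2,3))
  define v where "v = col A j0"
  have v: "v \<in> carrier_vec n" "v $ i0 \<noteq> 0" using A ij by (auto simp: v_def)
  define hv where "hv = h *\<^sub>v v"
  have hvc: "hv \<in> carrier_vec n" using h v by (simp add: hv_def)
  have hihv: "hi *\<^sub>v hv = v"
    unfolding hv_def using assoc_mult_mat_vec[OF hi h v(1)] hhi v by auto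
  have "hv \<noteq> 0\<^sub>v n"
  proof
    assume "hv = 0\<^sub>v n"
    then have "v = hi *\<^sub>v 0\<^sub>v n" using hihv by simp
    then have "v $ i0 = 0" using hi ij by simp
    then show False using v by simp
  qed
  then obtain p where p: "p < n" "hv $ p \<noteq> 0" using hvc by (metis eq_vecI carrier_vecD index_zero_vec)
  obtain z0 where z0: "z0 \<in> carrier_vec n" "z0 \<bullet> v \<noteq> 0" "z0 \<bullet> hv \<noteq> 0"
  proof (cases "hv $ i0 \<noteq> 0")
    case True
    then show ?thesis using that[of "unit_vec n i0"] ij v hvc by (simp add: scalar_prod_left_unit)
  next
    case F1: False
    show ?thesis
    proof (cases "v $ p \<noteq> 0")
      case True
      then show ?thesis using that[of "unit_vec n p"] p v hvc by (simp add: scalar_prod_left_unit)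
    next
      case False
      have "(unit_vec n i0 + unit_vec n p) \<bullet> v = v $ i0 + v $ p"
        using add_scalar_prod_distrib[of "unit_vec n i0" n "unit_vec n p" v] ij p v
        by (simp add: scalar_prod_left_unit)
      moreover have "(unit_vec n i0 + unit_vec n p) \<bullet> hv = hv $ i0 + hv $ p"
        using add_scalar_prod_distrib[of "unit_vec n i0" n "unit_vec n p" hv] ij p hvc
        by (simp add: scalar_prod_left_unit)
      ultimately show ?thesis using that[of "unit_vec n i0 + unit_vec n p"] F1 False v p by auto
    qed
  qed
  define z where "z = (1 / (z0 \<bullet> v)) \<cdot>\<^sub>v z0"
  have zc: "z \<in> carrier_vec n" using z0 by (simp add: z_def)
  have zv: "z \<bullet> v = 1" using z0 v unfolding z_def by (simp add: smult_scalar_prod_distrib)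
  define s where "s = z \<bullet> hv"
  have sne: "s \<noteq> 0" using z0 hvc unfolding s_def z_def by (simp add: smult_scalar_prod_distrib)
  define w where "w = transpose_mat A *\<^sub>v z"
  have wc: "w \<in> carrier_vec n" using A zc by (simp add: w_def)
  have key: "w \<bullet> y = z \<bullet> (A *\<^sub>v y)" if y: "y \<in> carrier_vec n" for y
    unfolding w_def using transpose_vec_mult_scalar[OF A y zc] .
  have Av: "A *\<^sub>v v = hv - lam \<cdot>\<^sub>v v"
    unfolding A_def hv_def using minus_mult_distrib_mat_vec[of h n n "lam \<cdot>\<^sub>m 1\<^sub>m n" v] h v
      smult_one_mult_vec[OF v(1)] by auto
  have wv: "w \<bullet> v = s - lam"
    using key[OF v(1)] Av scalar_prod_minus_distrib[OF zc hvc, of "lam \<cdot>\<^sub>v v"] v zc zv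
    by (simp add: s_def scalar_prod_smult_distrib)
  define E where "E = mat n n (\<lambda>(i,j). v $ i * w $ j)"
  have E: "E \<in> carrier_mat n n" by (simp add: E_def)
  have EE: "E * E = (s - lam) \<cdot>\<^sub>m E"
  proof (rule eq_matI)
    fix i j assume i: "i < dim_row ((s - lam) \<cdot>\<^sub>m E)" and j: "j < dim_col ((s - lam) \<cdot>\<^sub>m E)"
    then have i: "i < n" and j: "j < n" using E by auto
    have "(E * E) $$ (i,j) = (\<Sum>k\<in>{0..<n}. (v $ i * w $ k) * (v $ k * w $ j))"
      using i j by (simp add: E_def scalar_prod_def)
    also have "\<dots> = (v $ i * w $ j) * (\<Sum>k\<in>{0..<n}. w $ k * v $ k)"
      by (simp add: sum_distrib_left mult_ac)
    also have "(\<Sum>k\<in>{0..<n}. w $ k * v $ k) = w \<bullet> v" using v by (simp add: scalar_prod_def)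
    finally show "(E * E) $$ (i,j) = ((s - lam) \<cdot>\<^sub>m E) $$ (i,j)"
      using i j wv by (simp add: E_def mult_ac)
  qed (use E in auto)
  define a where "a = 1 / lam"
  define c where "c = - (1 / s)"
  have coef: "a + c + a * c * (s - lam) = 0"
    unfolding a_def c_def using lam sne by (simp add: field_simps)
  define t where "t = 1\<^sub>m n + a \<cdot>\<^sub>m E"
  define ti where "ti = 1\<^sub>m n + c \<cdot>\<^sub>m E"
  have t: "t \<in> carrier_mat n n" and ti: "ti \<in> carrier_mat n n" by (auto simp: t_def ti_def E)
  have prod: "(1\<^sub>m n + x \<cdot>\<^sub>m E) * (1\<^sub>m n + y \<cdot>\<^sub>m E) = 1\<^sub>m n" if xy: "x + y + x * y * (s - lam) = 0" for x y
  proof -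
    have "(1\<^sub>m n + x \<cdot>\<^sub>m E) * (1\<^sub>m n + y \<cdot>\<^sub>m E)
       = 1\<^sub>m n * (1\<^sub>m n + y \<cdot>\<^sub>m E) + (x \<cdot>\<^sub>m E) * (1\<^sub>m n + y \<cdot>\<^sub>m E)"
      by (rule add_mult_distrib_mat) (use E in auto)
    also have "(x \<cdot>\<^sub>m E) * (1\<^sub>m n + y \<cdot>\<^sub>m E) = x \<cdot>\<^sub>m (E * (1\<^sub>m n + y \<cdot>\<^sub>m E))"
      by (rule mult_smult_assoc_mat) (use E in auto)
    also have "E * (1\<^sub>m n + y \<cdot>\<^sub>m E) = E * 1\<^sub>m n + E * (y \<cdot>\<^sub>m E)"
      by (rule mult_add_distrib_mat) (use E in auto)
    also have "E * (y \<cdot>\<^sub>m E) = y \<cdot>\<^sub>m (E * E)" by (rule mult_smult_distrib) (use E in auto)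
    finally have eq: "(1\<^sub>m n + x \<cdot>\<^sub>m E) * (1\<^sub>m n + y \<cdot>\<^sub>m E)
       = (1\<^sub>m n + y \<cdot>\<^sub>m E) + x \<cdot>\<^sub>m (E + y \<cdot>\<^sub>m ((s - lam) \<cdot>\<^sub>m E))"
      using E EE by simp
    show ?thesis unfolding eq
    proof (rule eq_matI)
      fix i j assume "i < dim_row (1\<^sub>m n :: 'a mat)" "j < dim_col (1\<^sub>m n :: 'a mat)"
      then have i: "i < n" and j: "j < n" by auto
      have "y * E $$ (i,j) + x * (E $$ (i,j) + y * ((s - lam) * E $$ (i,j)))
          = (x + y + x * y * (s - lam)) * E $$ (i,j)" by (simp add: algebra_simps)
      then have "y * E $$ (i,j) + x * (E $$ (i,j) + y * ((s - lam) * E $$ (i,j))) = 0"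
        using xy by simp
      then show "(1\<^sub>m n + y \<cdot>\<^sub>m E + x \<cdot>\<^sub>m (E + y \<cdot>\<^sub>m ((s - lam) \<cdot>\<^sub>m E))) $$ (i, j) = 1\<^sub>m n $$ (i, j)"
        using i j E by (simp add: algebra_simps)
    qed (use E in auto)
  qed
  have tti: "t * ti = 1\<^sub>m n" unfolding t_def ti_def using prod coef by auto
  have tit: "ti * t = 1\<^sub>m n" unfolding t_def ti_def using prod coef by (auto simp: algebra_simps)
  have rt: "vec_space.rank n (t - 1\<^sub>m n) \<le> 1"
  proof (rule vec_space.rank_le_1_product_entries[of _ n n "\<lambda>r. a * v $ r" "\<lambda>c. w $ c"])
    show "t - 1\<^sub>m n \<in> carrier_mat n n" by (rule minus_carrier_mat) simp
    fix r c assume "r < dim_row (t - 1\<^sub>m n)" "c < dim_col (t - 1\<^sub>m n)"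
    then show "(t - 1\<^sub>m n) $$ (r, c) = a * v $ r * w $ c" using t by (auto simp: t_def E_def)
  qed
  have N: "h - lam \<cdot>\<^sub>m t = A - E"
  proof (rule eq_matI)
    fix i j assume "i < dim_row (A - E)" "j < dim_col (A - E)"
    then have i: "i < n" and j: "j < n" using A E by auto
    show "(h - lam \<cdot>\<^sub>m t) $$ (i, j) = (A - E) $$ (i, j)"
      using i j h lam by (simp add: t_def A_def a_def E_def algebra_simps)
  qed (use h A t E in auto)
  have AE: "A - E \<in> carrier_mat n n" using E by (rule minus_carrier_mat)
  have sub: "\<exists>y \<in> carrier_vec n. col (A - E) j = A *\<^sub>v y" if jn: "j < n" for j
  proof -
    define y where "y = unit_vec n j - w $ j \<cdot>\<^sub>v unit_vec n j0"
    have yc: "y \<in> carrier_vec n" by (simp add: y_def)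
    have "col (A - E) j = A *\<^sub>v y"
    proof (rule eq_vecI)
      fix i assume "i < dim_vec (A *\<^sub>v y)"
      then have i: "i < n" using A by auto
      have rc: "row A i \<in> carrier_vec n" using A i by auto
      have "(A *\<^sub>v y) $ i = row A i \<bullet> unit_vec n j - row A i \<bullet> (w $ j \<cdot>\<^sub>v unit_vec n j0)"
        using i A scalar_prod_minus_distrib[OF rc, of "unit_vec n j" "w $ j \<cdot>\<^sub>v unit_vec n j0"]
        by (simp add: y_def)
      also have "\<dots> = A $$ (i,j) - w $ j * A $$ (i,j0)"
        using i jn ij A rc by (simp add: scalar_prod_smult_distrib scalar_prod_right_unit)
      finally show "col (A - E) j $ i = (A *\<^sub>v y) $ i" using i jn ij A
        by (simp add: E_def v_def mult_ac)
    qed (use jn A E in auto)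
    then show ?thesis using yc by auto
  qed
  have vx: "v = A *\<^sub>v unit_vec n j0"
    using A ij by (intro eq_vecI) (auto simp: v_def scalar_prod_right_unit)
  have zB: "z \<bullet> ((A - E) *\<^sub>v y) = 0" if y: "y \<in> carrier_vec n" for y
  proof -
    have Ey: "E *\<^sub>v y = (w \<bullet> y) \<cdot>\<^sub>v v"
    proof (rule eq_vecI)
      fix i assume "i < dim_vec ((w \<bullet> y) \<cdot>\<^sub>v v)"
      then have i: "i < n" using v by auto
      have "(E *\<^sub>v y) $ i = (\<Sum>k\<in>{0..<n}. v $ i * w $ k * y $ k)"
        using i y by (simp add: E_def scalar_prod_def)
      also have "\<dots> = v $ i * (\<Sum>k\<in>{0..<n}. w $ k * y $ k)"
        by (simp add: sum_distrib_left mult_ac)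
      finally show "(E *\<^sub>v y) $ i = ((w \<bullet> y) \<cdot>\<^sub>v v) $ i"
        using i v y wc by (simp add: scalar_prod_def mult_ac)
    qed (use E v in auto)
    have "z \<bullet> ((A - E) *\<^sub>v y) = z \<bullet> (A *\<^sub>v y) - z \<bullet> ((w \<bullet> y) \<cdot>\<^sub>v v)"
      using y minus_mult_distrib_mat_vec[OF A E y] Ey
        scalar_prod_minus_distrib[OF zc, of "A *\<^sub>v y" "(w \<bullet> y) \<cdot>\<^sub>v v"] A v by auto
    also have "\<dots> = 0" using key[OF y] zv zc v by (simp add: scalar_prod_smult_distrib)
    finally show ?thesis .
  qed
  have "vec_space.rank n (A - E) < vec_space.rank n A"
    by (rule vec_space.rank_less_functional[OF A AE sub _ zc _ zB, of "unit_vec n j0"])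
       (use vx zv in auto)
  then have "vec_space.rank n (h - lam \<cdot>\<^sub>m t) < vec_space.rank n (h - lam \<cdot>\<^sub>m 1\<^sub>m n)"
    using N unfolding A_def by simp
  then show ?thesis using t ti tti tit rt by blast
qed


lemma rank_prod_le:
  fixes X Y :: "'a::field mat"
  assumes X: "X \<in> carrier_mat n n" and Y: "Y \<in> carrier_mat n n"
  shows "vec_space.rank n (X * Y - c \<cdot>\<^sub>m 1\<^sub>m n)
     \<le> vec_space.rank n (X - c \<cdot>\<^sub>m 1\<^sub>m n) + vec_space.rank n (Y - 1\<^sub>m n)"
proof -
  have X1: "X - c \<cdot>\<^sub>m 1\<^sub>m n \<in> carrier_mat n n" by (rule minus_carrier_mat) simp
  have Y1: "Y - 1\<^sub>m n \<in> carrier_mat n n" by (rule minus_carrier_mat) simp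
  have "(X - c \<cdot>\<^sub>m 1\<^sub>m n) * Y = X * Y - (c \<cdot>\<^sub>m 1\<^sub>m n) * Y"
    by (rule minus_mult_distrib_mat[OF X _ Y]) simp
  also have "(c \<cdot>\<^sub>m 1\<^sub>m n) * Y = c \<cdot>\<^sub>m Y"
    using mult_smult_assoc_mat[OF one_carrier_mat Y, of c] Y by simp
  finally have e1: "(X - c \<cdot>\<^sub>m 1\<^sub>m n) * Y = X * Y - c \<cdot>\<^sub>m Y" .
  have e2: "X * Y - c \<cdot>\<^sub>m 1\<^sub>m n = (X * Y - c \<cdot>\<^sub>m Y) + c \<cdot>\<^sub>m (Y - 1\<^sub>m n)"
    using X Y by (intro eq_matI) (auto simp: algebra_simps)
  have "vec_space.rank n (X * Y - c \<cdot>\<^sub>m 1\<^sub>m n)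
      \<le> vec_space.rank n ((X - c \<cdot>\<^sub>m 1\<^sub>m n) * Y) + vec_space.rank n (c \<cdot>\<^sub>m (Y - 1\<^sub>m n))"
    unfolding e2 e1[symmetric]
    by (rule rank_add_le) (use X1 Y Y1 in auto)
  also have "\<dots> \<le> vec_space.rank n (X - c \<cdot>\<^sub>m 1\<^sub>m n) + vec_space.rank n (Y - 1\<^sub>m n)"
    using vec_space.rank_mult_le[OF X1 Y] rank_smult_le[OF Y1, of c] by linarith
  finally show ?thesis .
qed

lemma rank_prod_le1:
  fixes X Y :: "'a::field mat"
  assumes X: "X \<in> carrier_mat n n" and Y: "Y \<in> carrier_mat n n"
  shows "vec_space.rank n (X * Y - 1\<^sub>m n)
     \<le> vec_space.rank n (X - 1\<^sub>m n) + vec_space.rank n (Y - 1\<^sub>m n)"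
proof -
  have "1 \<cdot>\<^sub>m 1\<^sub>m n = (1\<^sub>m n :: 'a mat)" by (intro eq_matI) auto
  then show ?thesis using rank_prod_le[OF X Y, of 1] by simp
qed

lemma assoc4:
  fixes A B C D :: "'a::semiring_1 mat"
  assumes "A \<in> carrier_mat n n" "B \<in> carrier_mat n n" "C \<in> carrier_mat n n" "D \<in> carrier_mat n n"
  shows "A * B * (C * D) = A * (B * C) * D"
proof -
  have "A * B * (C * D) = A * (B * (C * D))" by (rule assoc_mult_mat) (use assms in auto)
  also have "B * (C * D) = B * C * D" by (rule assoc_mult_mat[symmetric]) (use assms in auto)
  also have "A * (B * C * D) = A * (B * C) * D" by (rule assoc_mult_mat[symmetric]) (use assms in auto)
  finally show ?thesis .
qed

lemma iter:
  fixes g :: "'a::field mat"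
  assumes g: "g \<in> carrier_mat n n" and gi: "gi \<in> carrier_mat n n"
    and ggi: "g * gi = 1\<^sub>m n" and gig: "gi * g = 1\<^sub>m n" and lam: "lam \<noteq> 0"
  shows "j \<le> vec_space.rank n (g - lam \<cdot>\<^sub>m 1\<^sub>m n) \<Longrightarrow>
    \<exists>h hi k ki. h \<in> carrier_mat n n \<and> hi \<in> carrier_mat n n \<and> k \<in> carrier_mat n n \<and> ki \<in> carrier_mat n n
      \<and> h * hi = 1\<^sub>m n \<and> hi * h = 1\<^sub>m n \<and> k * ki = 1\<^sub>m n \<and> ki * k = 1\<^sub>m n \<and> g = h * k
      \<and> vec_space.rank n (h - lam \<cdot>\<^sub>m 1\<^sub>m n) + j \<le> vec_space.rank n (g - lam \<cdot>\<^sub>m 1\<^sub>m n)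
      \<and> vec_space.rank n (k - 1\<^sub>m n) \<le> j"
proof (induction j)
  case 0
  have e: "1\<^sub>m n - 1\<^sub>m n = (0\<^sub>m n n :: 'a mat)" by (intro eq_matI) auto
  have "vec_space.rank n (1\<^sub>m n - 1\<^sub>m n :: 'a mat) = 0" unfolding e by (rule vec_space.rank_0I)
  then show ?case using g gi ggi gig
    by (intro exI[of _ g] exI[of _ gi] exI[of _ "1\<^sub>m n"] exI[of _ "1\<^sub>m n"]) auto
next
  case (Suc j)
  then obtain h hi k ki where hk: "h \<in> carrier_mat n n" "hi \<in> carrier_mat n n" "k \<in> carrier_mat n n"
    "ki \<in> carrier_mat n n" "h * hi = 1\<^sub>m n" "hi * h = 1\<^sub>m n" "k * ki = 1\<^sub>m n" "ki * k = 1\<^sub>m n" "g = h * k"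
    "vec_space.rank n (h - lam \<cdot>\<^sub>m 1\<^sub>m n) + j \<le> vec_space.rank n (g - lam \<cdot>\<^sub>m 1\<^sub>m n)"
    "vec_space.rank n (k - 1\<^sub>m n) \<le> j" by auto
  show ?case
  proof (cases "vec_space.rank n (h - lam \<cdot>\<^sub>m 1\<^sub>m n) = 0")
    case True
    show ?thesis
      apply (rule exI[of _ h], rule exI[of _ hi], rule exI[of _ k], rule exI[of _ ki])
      using True hk Suc.prems by auto
  next
    case False
    then obtain t ti where t: "t \<in> carrier_mat n n" "ti \<in> carrier_mat n n" "t * ti = 1\<^sub>m n" "ti * t = 1\<^sub>m n"
      "vec_space.rank n (t - 1\<^sub>m n) \<le> 1"
      "vec_space.rank n (h - lam \<cdot>\<^sub>m t) < vec_space.rank n (h - lam \<cdot>\<^sub>m 1\<^sub>m n)"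
      using step[OF hk(1) hk(2) hk(6) lam] by auto
    have c1: "h * ti \<in> carrier_mat n n" "t * hi \<in> carrier_mat n n" "t * k \<in> carrier_mat n n"
      "ki * ti \<in> carrier_mat n n" using hk t by auto
    have i1: "h * ti * (t * hi) = 1\<^sub>m n"
    proof -
      have "h * ti * (t * hi) = h * (ti * t) * hi"
        using hk t by (simp add: assoc4)
      then show ?thesis using hk t by simp
    qed
    have i2: "t * hi * (h * ti) = 1\<^sub>m n"
    proof -
      have "t * hi * (h * ti) = t * (hi * h) * ti"
        using hk t by (simp add: assoc4)
      then show ?thesis using hk t by simp
    qed
    have i3: "t * k * (ki * ti) = 1\<^sub>m n"
    proof -
      have "t * k * (ki * ti) = t * (k * ki) * ti"
        using hk t by (simp add: assoc4)
      then show ?thesis using hk t by simp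
    qed
    have i4: "ki * ti * (t * k) = 1\<^sub>m n"
    proof -
      have "ki * ti * (t * k) = ki * (ti * t) * k"
        using hk t by (simp add: assoc4)
      then show ?thesis using hk t by simp
    qed
    have gg: "g = h * ti * (t * k)"
    proof -
      have "h * ti * (t * k) = h * (ti * t) * k"
        using hk t by (simp add: assoc4)
      then show ?thesis using hk t by simp
    qed
    have ht: "h * ti - lam \<cdot>\<^sub>m 1\<^sub>m n = (h - lam \<cdot>\<^sub>m t) * ti"
    proof -
      have "(h - lam \<cdot>\<^sub>m t) * ti = h * ti - (lam \<cdot>\<^sub>m t) * ti"
        by (rule minus_mult_distrib_mat) (use hk t in auto)
      also have "(lam \<cdot>\<^sub>m t) * ti = lam \<cdot>\<^sub>m (t * ti)" using t by (simp add: mult_smult_assoc_mat)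
      finally show ?thesis using t by simp
    qed
    have ht1: "h - lam \<cdot>\<^sub>m t \<in> carrier_mat n n" by (rule minus_carrier_mat) (use t in auto)
    have r1: "vec_space.rank n (h * ti - lam \<cdot>\<^sub>m 1\<^sub>m n) = vec_space.rank n (h - lam \<cdot>\<^sub>m t)"
      unfolding ht by (rule rank_mult_inv[OF ht1 t(2) t(1) t(4)])
    have r2: "vec_space.rank n (t * k - 1\<^sub>m n) \<le> vec_space.rank n (t - 1\<^sub>m n) + vec_space.rank n (k - 1\<^sub>m n)"
      by (rule rank_prod_le1) (use t hk in auto)
    show ?thesis
      apply (rule exI[of _ "h * ti"], rule exI[of _ "t * hi"], rule exI[of _ "t * k"], rule exI[of _ "ki * ti"])
      using c1 i1 i2 i3 i4 gg r1 r2 t(5,6) hk(10,11) by auto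
  qed
qed

lemma GLI:
  fixes h :: "'a::field mat"
  assumes "h \<in> carrier_mat n n" "hi \<in> carrier_mat n n" "h * hi = 1\<^sub>m n" "hi * h = 1\<^sub>m n"
  shows "h \<in> GL n"
  using assms unfolding GL_def invertible_mat_def inverts_mat_def square_mat.simps by auto

lemma GLD:
  fixes g :: "'a::field mat"
  assumes "g \<in> GL n"
  obtains gi where "g \<in> carrier_mat n n" "gi \<in> carrier_mat n n" "g * gi = 1\<^sub>m n" "gi * g = 1\<^sub>m n"
proof -
  have g: "g \<in> carrier_mat n n" using assms by (simp add: GL_def)
  obtain B where B: "g * B = 1\<^sub>m (dim_row g)" "B * g = 1\<^sub>m (dim_row B)"
    using assms unfolding GL_def invertible_mat_def inverts_mat_def by auto
  have "dim_col B = n" using B(1) g by (metis carrier_matD(1) index_mult_mat(3) index_one_mat(3))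
  moreover have "dim_row B = n" using B(2) g by (metis carrier_matD(2) index_mult_mat(3) index_one_mat(3))
  ultimately have "B \<in> carrier_mat n n" by auto
  then show ?thesis using that[of B] g B by auto
qed


lemma rank_multrow_le1:
  fixes e :: "'a::field"
  assumes n: "0 < n"
  shows "vec_space.rank n (multrow_mat n 0 e - 1\<^sub>m n) \<le> 1"
proof (rule vec_space.rank_le_1_product_entries[of _ n n "\<lambda>r. if r = 0 then e - 1 else 0" "\<lambda>c. if c = 0 then 1 else 0"])
  show "multrow_mat n 0 e - 1\<^sub>m n \<in> carrier_mat n n" by (rule minus_carrier_mat) simp
  fix r c assume "r < dim_row (multrow_mat n 0 e - 1\<^sub>m n)" "c < dim_col (multrow_mat n 0 e - 1\<^sub>m n)"
  then show "(multrow_mat n 0 e - 1\<^sub>m n) $$ (r, c) = (if r = 0 then e - 1 else 0) * (if c = 0 then 1 else 0)"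
    by (auto simp: multrow_mat_def)
qed

theorem lemma2p3:
  fixes g :: "'a::field mat" and n r :: nat and lam :: 'a and phi1 phi2 :: real
  assumes "n \<ge> 1"
    and "g \<in> GL n"
    and "lam \<noteq> 0"
    and "vec_space.rank n (g - lam \<cdot>\<^sub>m 1\<^sub>m n) = r"
    and "phi1 \<ge> 0" and "phi2 \<ge> 0" and "phi1 + phi2 = real r"
  shows "(\<exists>h k. h \<in> GL n \<and> k \<in> GL n \<and> g = h * k
            \<and> \<bar>real (vec_space.rank n (h - lam \<cdot>\<^sub>m 1\<^sub>m n)) - phi1\<bar> \<le> 2
            \<and> \<bar>real (vec_space.rank n (k - 1\<^sub>m n)) - phi2\<bar> \<le> 2)
       \<and> (g \<in> SL n \<longrightarrow>
          (\<exists>h k. h \<in> SL n \<and> k \<in> SL n \<and> g = h * k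
            \<and> \<bar>real (vec_space.rank n (h - lam \<cdot>\<^sub>m 1\<^sub>m n)) - phi1\<bar> \<le> 3
            \<and> \<bar>real (vec_space.rank n (k - 1\<^sub>m n)) - phi2\<bar> \<le> 3))"
proof -
  obtain gi where g: "g \<in> carrier_mat n n" and gi: "gi \<in> carrier_mat n n"
    and ggi: "g * gi = 1\<^sub>m n" and gig: "gi * g = 1\<^sub>m n" using GLD[OF assms(2)] by metis
  define j where "j = nat \<lfloor>phi2\<rfloor>"
  have jr: "real j \<le> phi2" "phi2 < real j + 1" unfolding j_def using assms(6)
    by (auto simp: of_nat_nat)
  have "j \<le> r" using jr assms(5,7) by linarith
  then obtain h hi k ki where hk: "h \<in> carrier_mat n n" "hi \<in> carrier_mat n n" "k \<in> carrier_mat n n"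
    "ki \<in> carrier_mat n n" "h * hi = 1\<^sub>m n" "hi * h = 1\<^sub>m n" "k * ki = 1\<^sub>m n" "ki * k = 1\<^sub>m n" "g = h * k"
    "vec_space.rank n (h - lam \<cdot>\<^sub>m 1\<^sub>m n) + j \<le> r"
    "vec_space.rank n (k - 1\<^sub>m n) \<le> j"
    using iter[OF g gi ggi gig assms(3), of j] assms(4) by auto
  have low: "r \<le> vec_space.rank n (h - lam \<cdot>\<^sub>m 1\<^sub>m n) + vec_space.rank n (k - 1\<^sub>m n)"
    using rank_prod_le[OF hk(1) hk(3), of lam] hk(9) assms(4) by simp
  have a_eq: "vec_space.rank n (h - lam \<cdot>\<^sub>m 1\<^sub>m n) = r - j" and b_eq: "vec_space.rank n (k - 1\<^sub>m n) = j"
    using low hk(10,11) by auto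
  have partA: "\<exists>h k. h \<in> GL n \<and> k \<in> GL n \<and> g = h * k
            \<and> \<bar>real (vec_space.rank n (h - lam \<cdot>\<^sub>m 1\<^sub>m n)) - phi1\<bar> \<le> 2
            \<and> \<bar>real (vec_space.rank n (k - 1\<^sub>m n)) - phi2\<bar> \<le> 2"
  proof (intro exI conjI)
    show "h \<in> GL n" using GLI[OF hk(1,2,5,6)] .
    show "k \<in> GL n" using GLI[OF hk(3,4,7,8)] .
    show "g = h * k" by (rule hk(9))
    show "\<bar>real (vec_space.rank n (h - lam \<cdot>\<^sub>m 1\<^sub>m n)) - phi1\<bar> \<le> 2"
      unfolding a_eq using \<open>j \<le> r\<close> jr assms(7) by (simp add: of_nat_diff)
    show "\<bar>real (vec_space.rank n (k - 1\<^sub>m n)) - phi2\<bar> \<le> 2"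
      unfolding b_eq using jr by linarith
  qed
  have partB: "\<exists>h k. h \<in> SL n \<and> k \<in> SL n \<and> g = h * k
            \<and> \<bar>real (vec_space.rank n (h - lam \<cdot>\<^sub>m 1\<^sub>m n)) - phi1\<bar> \<le> 3
            \<and> \<bar>real (vec_space.rank n (k - 1\<^sub>m n)) - phi2\<bar> \<le> 3" if sl: "g \<in> SL n"
  proof -
    have n0: "0 < n" using assms(1) by simp
    define d where "d = det k"
    have "det k * det ki = 1" using det_mult[OF hk(3) hk(4)] hk(7) by simp
    then have d0: "d \<noteq> 0" unfolding d_def by auto
    define D where "D = multrow_mat n 0 d"
    define Di where "Di = multrow_mat n 0 (inverse d)"
    have D: "D \<in> carrier_mat n n" "Di \<in> carrier_mat n n" by (auto simp: D_def Di_def)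
    have DDi: "D * Di = 1\<^sub>m n" unfolding D_def Di_def by (rule multrow_mat_inv[OF n0 d0])
    have gg: "g = h * D * (Di * k)"
    proof -
      have "h * D * (Di * k) = h * (D * Di) * k" using hk D by (simp add: assoc4)
      then show ?thesis using hk DDi by simp
    qed
    have dg: "det g = 1" using sl by (simp add: SL_def)
    have dh: "det (h * D) = 1"
      using det_mult[OF hk(1) D(1)] det_mult[OF hk(1) hk(3)] hk(9) dg n0
      by (simp add: D_def d_def det_multrow_mat)
    have dk: "det (Di * k) = 1"
      using det_mult[OF D(2) hk(3)] n0 d0 by (simp add: Di_def d_def det_multrow_mat)
    have ra: "vec_space.rank n (h * D - lam \<cdot>\<^sub>m 1\<^sub>m n) \<le> r - j + 1"
      using rank_prod_le[OF hk(1) D(1), of lam] rank_multrow_le1[OF n0, of d] a_eq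
      unfolding D_def by linarith
    have rb: "vec_space.rank n (Di * k - 1\<^sub>m n) \<le> j + 1"
      using rank_prod_le1[OF D(2) hk(3)] rank_multrow_le1[OF n0, of "inverse d"] b_eq
      unfolding Di_def by linarith
    have low2: "r \<le> vec_space.rank n (h * D - lam \<cdot>\<^sub>m 1\<^sub>m n) + vec_space.rank n (Di * k - 1\<^sub>m n)"
      using rank_prod_le[of "h * D" n "Di * k" lam] hk D gg assms(4) by simp
    define a2 where "a2 = vec_space.rank n (h * D - lam \<cdot>\<^sub>m 1\<^sub>m n)"
    define b2 where "b2 = vec_space.rank n (Di * k - 1\<^sub>m n)"
    have R: "real a2 \<le> real r - real j + 1" "real b2 \<le> real j + 1" "real r \<le> real a2 + real b2"
      using ra rb low2 \<open>j \<le> r\<close> unfolding a2_def[symmetric] b2_def[symmetric]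
      by (simp_all add: of_nat_diff flip: of_nat_add) 
    show ?thesis
    proof (intro exI conjI)
      show "h * D \<in> SL n" using hk D dh by (simp add: SL_def)
      show "Di * k \<in> SL n" using hk D dk by (simp add: SL_def)
      show "g = h * D * (Di * k)" by (rule gg)
      show "\<bar>real (vec_space.rank n (h * D - lam \<cdot>\<^sub>m 1\<^sub>m n)) - phi1\<bar> \<le> 3"
        unfolding a2_def[symmetric] using R jr assms(7) by linarith
      show "\<bar>real (vec_space.rank n (Di * k - 1\<^sub>m n)) - phi2\<bar> \<le> 3"
        unfolding b2_def[symmetric] using R jr assms(7) by linarith
    qed
  qed
  show ?thesis using partA partB by blast
qed

end
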